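(* Let $d, n$ be positive integers and let $\delta \ge 0$ satisfy $\delta n < 1$. Let $\mathbf{v}_1, \ldots, \mathbf{v}_n \in \mathbb{R}^d$ be unit vectors that are pairwise $\delta$-orthogonal, i.e. $|\mathbf{v}_i \cdot \mathbf{v}_j| \le \delta$ for all $i \neq j$. Let $\mathbf{z} = (z_1, \ldots, z_n)^T \in \mathbb{R}^n$ and suppose that $\mathbf{y} = \sum_{k=1}^n z_k \mathbf{v}_k$ (equivalently $\mathbf{y} = \mathbf{A}\mathbf{z}$ with $\mathbf{A} = [\mathbf{v}_1, \ldots, \mathbf{v}_n]$) satisfies $\lVert \mathbf{y} \rVert_2 = 1$. Then $$\left|\sum_{k=1}^{n} z_k\right| \le \lVert \mathbf{z} \rVert_1 \le \sqrt{\frac{n}{1 - \delta n}}.$$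
   Context: $\lVert \cdot \rVert_1$ and $\lVert \cdot \rVert_2$ denote the $\ell_1$ and Euclidean norms. Two unit vectors are called $\delta$-orthogonal if the absolute value of their dot product is at most $\delta$. *)

theory Defs
  imports "HOL-Analysis.Analysis"
begin

end

theory Submission
  imports Defs
begin

theorem mainTheorem1:
  fixes n :: nat and \<delta> :: real
    and v :: "nat \<Rightarrow> real ^ 'd" and z :: "nat \<Rightarrow> real" and y :: "real ^ 'd"
  assumes "n \<ge> 1"
    and "\<delta> \<ge> 0" and "\<delta> * real n < 1"
    and "\<forall>i\<in>{1..n}. norm (v i) = 1"
    and "\<forall>i\<in>{1..n}. \<forall>j\<in>{1..n}. i \<noteq> j \<longrightarrow> \<bar>v i \<bullet> v j\<bar> \<le> \<delta>"
    and "y = (\<Sum>k=1..n. z k *\<^sub>R v k)"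
    and "norm y = 1"
  shows "\<bar>\<Sum>k=1..n. z k\<bar> \<le> (\<Sum>k=1..n. \<bar>z k\<bar>)
    \<and> (\<Sum>k=1..n. \<bar>z k\<bar>) \<le> sqrt (real n / (1 - \<delta> * real n))"
proof
  show "\<bar>\<Sum>k=1..n. z k\<bar> \<le> (\<Sum>k=1..n. \<bar>z k\<bar>)" by (rule sum_abs)
  define S1 where "S1 = (\<Sum>k=1..n. \<bar>z k\<bar>)"
  define S2 where "S2 = (\<Sum>k=1..n. (z k)\<^sup>2)"
  have cs: "S1\<^sup>2 \<le> S2 * real n"
    using sum_squared_le_sum_of_squares[of "\<lambda>k. \<bar>z k\<bar>" "{1..n}"]
    by (simp add: S1_def S2_def)
  have trm: "z i * z j * (v i \<bullet> v j) \<ge> (if i = j then (z i)\<^sup>2 else 0) - \<delta> * (\<bar>z i\<bar> * \<bar>z j\<bar>)"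
    if "i \<in> {1..n}" "j \<in> {1..n}" for i j
  proof (cases "i = j")
    case True
    have "v i \<bullet> v i = 1" using assms(4) that by (simp add: dot_square_norm)
    then show ?thesis using True assms(2) by (simp add: power2_eq_square)
  next
    case False
    have "\<bar>v i \<bullet> v j\<bar> \<le> \<delta>" using assms(5) that False by blast
    hence "\<bar>z i * z j * (v i \<bullet> v j)\<bar> \<le> \<bar>z i\<bar> * \<bar>z j\<bar> * \<delta>"
      by (simp add: abs_mult mult_left_mono)
    then show ?thesis using False by (simp add: algebra_simps)
  qed
  have "1 = y \<bullet> y" using assms(7) by (simp add: dot_square_norm)
  also have "\<dots> = (\<Sum>i=1..n. \<Sum>j=1..n. z i * z j * (v i \<bullet> v j))"
    by (simp add: assms(6) inner_sum_left inner_sum_right sum_distrib_left algebra_simps inner_commute)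
  also have "\<dots> \<ge> (\<Sum>i=1..n. \<Sum>j=1..n. (if i = j then (z i)\<^sup>2 else 0) - \<delta> * (\<bar>z i\<bar> * \<bar>z j\<bar>))"
    by (intro sum_mono trm) auto
  finally have "1 \<ge> (\<Sum>i=1..n. \<Sum>j=1..n. (if i = j then (z i)\<^sup>2 else 0) - \<delta> * (\<bar>z i\<bar> * \<bar>z j\<bar>))" .
  moreover have "(\<Sum>i=1..n. \<Sum>j=1..n. (if i = j then (z i)\<^sup>2 else 0) - \<delta> * (\<bar>z i\<bar> * \<bar>z j\<bar>)) = S2 - \<delta> * S1\<^sup>2"
    by (simp add: sum_subtractf S1_def S2_def power2_eq_square sum_distrib_left sum_distrib_right mult_ac)
  ultimately have h1: "S2 - \<delta> * S1\<^sup>2 \<le> 1" by simp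
  have np: "real n > 0" using assms(1) by simp
  have "S1\<^sup>2 * (1 - \<delta> * real n) \<le> real n"
  proof -
    have "S1\<^sup>2 - \<delta> * real n * S1\<^sup>2 \<le> S2 * real n - \<delta> * S1\<^sup>2 * real n"
      using cs by (simp add: algebra_simps)
    also have "\<dots> = (S2 - \<delta> * S1\<^sup>2) * real n" by (simp add: algebra_simps)
    also have "\<dots> \<le> real n" using h1 np by (simp add: mult_left_le_one_le)
    finally show ?thesis by (simp add: algebra_simps)
  qed
  hence "S1\<^sup>2 \<le> real n / (1 - \<delta> * real n)" using assms(3) by (simp add: field_simps)
  hence "sqrt (S1\<^sup>2) \<le> sqrt (real n / (1 - \<delta> * real n))" by (rule real_sqrt_le_mono)
  moreover have "S1 \<ge> 0" unfolding S1_def by (simp add: sum_nonneg)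
  ultimately show "(\<Sum>k=1..n. \<bar>z k\<bar>) \<le> sqrt (real n / (1 - \<delta> * real n))"
    by (simp add: S1_def)
qed

end
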